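(* Let $\Phi$ be any incoherent operation (IO) acting on a single qubit $\mathcal{H}_2$ with respect to the computational basis $\{|1\rangle,|2\rangle\}$. Then $\Phi$ admits a Kraus decomposition $\Phi(\rho)=\sum_{n=1}^4 K_n\rho K_n^\dagger$ consisting of four incoherent Kraus operators of the form $$K_1=\begin{pmatrix} a_1 & b_1\\ 0&0\end{pmatrix},\quad K_2=\begin{pmatrix} 0&0\\ a_2 & b_2\end{pmatrix},\quad K_3=\begin{pmatrix} a_3 & 0\\ 0& b_3\end{pmatrix},\quad K_4=\begin{pmatrix} 0 & b_4\\ a_4& 0\end{pmatrix},$$ where $a_1,\dots,a_4\in\mathbb{R}$ and $b_1,\dots,b_4\in\mathbb{C}$ satisfy $\sum_{i=1}^4 a_i^2=\sum_{j=1}^4|b_j|^2=1$ and $a_1b_1+a_2b_2=0$.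
   Context: Fix an orthonormal basis $\{|i\rangle\}_{i=1}^d$ of $\mathcal{H}_d$. A state is incoherent if it is diagonal in this basis, i.e. of the form $\delta=\sum_{i=1}^d\delta_i|i\rangle\langle i|$ with $\delta_i\ge 0$, $\sum_i\delta_i=1$; let $\mathcal{I}$ denote the set of incoherent states. A completely positive trace-preserving map $\Phi$ is an incoherent operation (IO) if it has a Kraus representation $\Phi(\rho)=\sum_n K_n\rho K_n^\dagger$, $\sum_n K_n^\dagger K_n=I$, such that $K_n\rho K_n^\dagger/\mathrm{Tr}[K_n\rho K_n^\dagger]\in\mathcal{I}$ for all $n$ and all $\rho\in\mathcal{I}$ (whenever the trace is nonzero); such Kraus operators are called incoherent Kraus operators (equivalently, each column of each $K_n$ has at most one nonzero entry). *)

theory Defs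
  imports "Jordan_Normal_Form.Schur_Decomposition"
begin

text \<open>Matrices on H_d are d x d complex matrices (indices 0..d-1 stand for the basis 1..d).\<close>

definition mtrace :: "complex mat \<Rightarrow> complex" where
  "mtrace A = (\<Sum>i<dim_row A. A $$ (i, i))"

definition incoherent_state :: "nat \<Rightarrow> complex mat \<Rightarrow> bool" where
  "incoherent_state d \<delta> \<longleftrightarrow> \<delta> \<in> carrier_mat d d \<and> diagonal_mat \<delta> \<and>
     (\<forall>i<d. \<delta> $$ (i, i) \<in> \<real> \<and> Re (\<delta> $$ (i, i)) \<ge> 0) \<and> mtrace \<delta> = 1"

definition incoherent_kraus :: "nat \<Rightarrow> complex mat \<Rightarrow> bool" where
  "incoherent_kraus d K \<longleftrightarrow> K \<in> carrier_mat d d \<and>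
     (\<forall>\<rho>. incoherent_state d \<rho> \<longrightarrow> mtrace (K * \<rho> * mat_adjoint K) \<noteq> 0 \<longrightarrow>
        incoherent_state d ((1 / mtrace (K * \<rho> * mat_adjoint K)) \<cdot>\<^sub>m (K * \<rho> * mat_adjoint K)))"

definition msum :: "nat \<Rightarrow> (complex mat \<Rightarrow> complex mat) \<Rightarrow> complex mat list \<Rightarrow> complex mat" where
  "msum d f Ks = foldr (\<lambda>K acc. f K + acc) Ks (0\<^sub>m d d)"

definition kraus_apply :: "nat \<Rightarrow> complex mat list \<Rightarrow> complex mat \<Rightarrow> complex mat" where
  "kraus_apply d Ks \<rho> = msum d (\<lambda>K. K * \<rho> * mat_adjoint K) Ks"

definition IO :: "nat \<Rightarrow> (complex mat \<Rightarrow> complex mat) \<Rightarrow> bool" where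
  "IO d \<Phi> \<longleftrightarrow> (\<exists>Ks. (\<forall>K\<in>set Ks. incoherent_kraus d K) \<and>
      msum d (\<lambda>K. mat_adjoint K * K) Ks = 1\<^sub>m d \<and>
      (\<forall>\<rho>\<in>carrier_mat d d. \<Phi> \<rho> = kraus_apply d Ks \<rho>))"

end

theory Submission
  imports Defs
begin


lemma adj_entry: "A \<in> carrier_mat n n \<Longrightarrow> i < n \<Longrightarrow> j < n \<Longrightarrow> mat_adjoint A $$ (i,j) = cnj (A $$ (j,i))"
  unfolding mat_adjoint_def by (simp add: mat_of_rows_def)

lemma adj_carrier: "A \<in> carrier_mat n n \<Longrightarrow> mat_adjoint A \<in> carrier_mat n n"
  unfolding mat_adjoint_def by (simp add: mat_of_rows_def)

lemma sum2: "(\<Sum>k<2. f k) = f 0 + f (1::nat)"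
  by (simp add: numeral_2_eq_2)

lemma mult2_entry: "A \<in> carrier_mat 2 2 \<Longrightarrow> B \<in> carrier_mat 2 2 \<Longrightarrow> i < 2 \<Longrightarrow> j < 2 \<Longrightarrow>
   (A * B) $$ (i,j) = A$$(i,0) * B$$(0,j) + A$$(i,1) * B$$(1,j)"
  by (simp add: scalar_prod_def row_def col_def sum2 atLeast0LessThan)

lemma sandwich_entry:
  assumes "K \<in> carrier_mat 2 2" "\<rho> \<in> carrier_mat 2 2" "i < 2" "j < 2"
  shows "(K * \<rho> * mat_adjoint K) $$ (i,j) =
     K$$(i,0) * \<rho>$$(0,0) * cnj (K$$(j,0)) + K$$(i,0) * \<rho>$$(0,1) * cnj (K$$(j,1)) +
     K$$(i,1) * \<rho>$$(1,0) * cnj (K$$(j,0)) + K$$(i,1) * \<rho>$$(1,1) * cnj (K$$(j,1))"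
proof -
  have c: "K * \<rho> \<in> carrier_mat 2 2" "mat_adjoint K \<in> carrier_mat 2 2" using assms adj_carrier by auto
  have e1: "(K * \<rho>) $$ (i,l) = K$$(i,0) * \<rho>$$(0,l) + K$$(i,1) * \<rho>$$(1,l)" if "l < 2" for l
    using mult2_entry[OF assms(1,2)] assms that by blast
  show ?thesis
    by (simp add: mult2_entry[OF c assms(3,4)] e1 adj_entry[OF assms(1)] assms algebra_simps)
qed

lemma KdK_entry:
  assumes "K \<in> carrier_mat 2 2" "l < 2" "m < 2"
  shows "(mat_adjoint K * K) $$ (l,m) = cnj (K$$(0,l)) * K$$(0,m) + cnj (K$$(1,l)) * K$$(1,m)"
  using assms by (simp add: mult2_entry[OF adj_carrier[OF assms(1)] assms(1)] adj_entry)

lemma lt2: "(i::nat) < 2 \<longleftrightarrow> i = 0 \<or> i = 1" by auto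

lemma mtrace2: "A \<in> carrier_mat 2 2 \<Longrightarrow> mtrace A = A$$(0,0) + A$$(1,1)"
  unfolding mtrace_def by (simp add: sum2)

lemma ncs: "z * cnj z = (complex_of_real (cmod z))^2"
  by (metis complex_norm_square of_real_power)

lemma prod0: "(a::complex) * b = 0 \<Longrightarrow> a * c * cnj b = 0"
  by auto

lemma inc_state_D:
  assumes "incoherent_state 2 \<rho>"
  shows "\<rho> \<in> carrier_mat 2 2" "\<rho>$$(0,1) = 0" "\<rho>$$(1,0) = 0"
    "\<rho>$$(0,0) = of_real (Re (\<rho>$$(0,0)))" "\<rho>$$(1,1) = of_real (Re (\<rho>$$(1,1)))"
    "Re (\<rho>$$(0,0)) \<ge> 0" "Re (\<rho>$$(1,1)) \<ge> 0"
  using assms unfolding incoherent_state_def diagonal_mat_def by auto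

lemma inc_suff:
  assumes K: "K \<in> carrier_mat 2 2" and z1: "K$$(0,0) * K$$(1,0) = 0" and z2: "K$$(0,1) * K$$(1,1) = 0"
  shows "incoherent_kraus 2 K"
  unfolding incoherent_kraus_def
proof (intro conjI allI impI K)
  fix \<rho> assume st: "incoherent_state 2 \<rho>" and tr: "mtrace (K * \<rho> * mat_adjoint K) \<noteq> 0"
  note r = inc_state_D[OF st]
  define p where "p = Re (\<rho>$$(0,0))"
  define q where "q = Re (\<rho>$$(1,1))"
  define M where "M = K * \<rho> * mat_adjoint K"
  have Mc: "M \<in> carrier_mat 2 2" unfolding M_def
    using mult_carrier_mat[OF mult_carrier_mat[OF K r(1)] adj_carrier[OF K]] .
  have r00: "\<rho>$$(0,0) = of_real p" and r11: "\<rho>$$(1,1) = of_real q" using r p_def q_def by auto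
  have pq: "p \<ge> 0" "q \<ge> 0" using r p_def q_def by auto
  have M00: "M$$(0,0) = of_real ((cmod (K$$(0,0)))\<^sup>2 * p + (cmod (K$$(0,1)))\<^sup>2 * q)"
    unfolding M_def using sandwich_entry[OF K r(1), of 0 0] r(2,3) r00 r11
    by (simp add: ncs algebra_simps)
  have M11: "M$$(1,1) = of_real ((cmod (K$$(1,0)))\<^sup>2 * p + (cmod (K$$(1,1)))\<^sup>2 * q)"
    unfolding M_def using sandwich_entry[OF K r(1), of 1 1] r(2,3) r00 r11
    by (simp add: ncs algebra_simps)
  have M01: "M$$(0,1) = 0"
    unfolding M_def using sandwich_entry[OF K r(1), of 0 1] r(2,3) z1 z2 by auto
  have z1': "K$$(1,0) * K$$(0,0) = 0" "K$$(1,1) * K$$(0,1) = 0" using z1 z2 by (simp_all add: mult.commute)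
  have M10: "M$$(1,0) = 0"
    unfolding M_def using sandwich_entry[OF K r(1), of 1 0] r(2,3) z1 z2 by auto
  define t where "t = (cmod (K$$(0,0)))\<^sup>2 * p + (cmod (K$$(0,1)))\<^sup>2 * q + ((cmod (K$$(1,0)))\<^sup>2 * p + (cmod (K$$(1,1)))\<^sup>2 * q)"
  have trM: "mtrace M = of_real t" unfolding t_def using mtrace2[OF Mc] M00 M11 by simp
  have t0: "t \<ge> 0" unfolding t_def using pq by simp
  have "t \<noteq> 0" using tr trM M_def by auto
  with t0 have tpos: "t > 0" by simp
  define N where "N = (1 / mtrace M) \<cdot>\<^sub>m M"
  have Nc: "N \<in> carrier_mat 2 2" unfolding N_def using Mc by simp
  have Ne: "N$$(i,j) = M$$(i,j) / of_real t" if "i < 2" "j < 2" for i j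
    unfolding N_def using that Mc trM by simp
  have "incoherent_state 2 N"
    unfolding incoherent_state_def diagonal_mat_def
  proof (intro conjI allI impI Nc)
    fix i j assume "i < dim_row N" "j < dim_col N" "i \<noteq> j"
    then show "N$$(i,j) = 0" using Nc Ne M01 M10 by (auto simp: lt2)
  next
    fix i :: nat assume "i < 2"
    then show "N$$(i,i) \<in> \<real>" "0 \<le> Re (N$$(i,i))" using Ne M00 M11 pq tpos
      by (auto simp: lt2 Reals_divide)
  next
    have s: "M$$(0,0) + M$$(1,1) = of_real t" using trM mtrace2[OF Mc] by simp
    have "mtrace N = M$$(0,0) / of_real t + M$$(1,1) / of_real t"
      using mtrace2[OF Nc] Ne[of 0 0] Ne[of 1 1] by simp
    also have "\<dots> = (M$$(0,0) + M$$(1,1)) / of_real t" by (simp add: add_divide_distrib)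
    also have "\<dots> = 1" using s tpos by simp
    finally show "mtrace N = 1" .
  qed
  then show "incoherent_state 2 ((1 / mtrace (K * \<rho> * mat_adjoint K)) \<cdot>\<^sub>m (K * \<rho> * mat_adjoint K))"
    unfolding N_def M_def .
qed

lemma inc_nec_col:
  assumes K: "incoherent_kraus 2 K" and c: "c < 2"
  shows "K$$(0,c) * K$$(1,c) = 0"
proof -
  have Kc: "K \<in> carrier_mat 2 2" using K unfolding incoherent_kraus_def by auto
  define \<rho> :: "complex mat" where "\<rho> = mat 2 2 (\<lambda>(i,j). if i = c \<and> j = c then 1 else 0)"
  have rc: "\<rho> \<in> carrier_mat 2 2" unfolding \<rho>_def by simp
  have st: "incoherent_state 2 \<rho>"
    unfolding incoherent_state_def diagonal_mat_def using c
    by (auto simp: \<rho>_def mtrace2 lt2)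
  define M where "M = K * \<rho> * mat_adjoint K"
  have Mc: "M \<in> carrier_mat 2 2" unfolding M_def
    using mult_carrier_mat[OF mult_carrier_mat[OF Kc rc] adj_carrier[OF Kc]] .
  have M01: "M$$(0,1) = K$$(0,c) * cnj (K$$(1,c))"
    unfolding M_def using sandwich_entry[OF Kc rc, of 0 1] c by (auto simp: \<rho>_def lt2)
  have tr: "mtrace M = of_real ((cmod (K$$(0,c)))\<^sup>2 + (cmod (K$$(1,c)))\<^sup>2)"
    unfolding mtrace2[OF Mc] unfolding M_def using sandwich_entry[OF Kc rc, of 0 0] sandwich_entry[OF Kc rc, of 1 1] c
    by (auto simp: \<rho>_def lt2 ncs)
  show ?thesis
  proof (cases "mtrace M = 0")
    case True
    then have "(cmod (K$$(0,c)))\<^sup>2 + (cmod (K$$(1,c)))\<^sup>2 = 0" using tr by (metis of_real_eq_0_iff)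
    then have "K$$(0,c) = 0"
      by (metis add_nonneg_eq_0_iff norm_eq_zero zero_eq_power2 zero_le_power2)
    then show ?thesis by simp
  next
    case False
    then have "incoherent_state 2 ((1 / mtrace M) \<cdot>\<^sub>m M)" using K st unfolding incoherent_kraus_def M_def by blast
    then have "M$$(0,1) = 0" unfolding incoherent_state_def diagonal_mat_def using Mc False by auto
    then show ?thesis using M01 by auto
  qed
qed

lemma inc_nec:
  assumes K: "incoherent_kraus 2 K"
  shows "K \<in> carrier_mat 2 2" "K$$(0,0) * K$$(1,0) = 0" "K$$(0,1) * K$$(1,1) = 0"
  using K inc_nec_col[OF K, of 0] inc_nec_col[OF K, of 1] unfolding incoherent_kraus_def by auto

definition choi :: "complex mat list \<Rightarrow> nat \<Rightarrow> nat \<Rightarrow> nat \<Rightarrow> nat \<Rightarrow> complex" where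
  "choi Ks i l j m = sum_list (map (\<lambda>K. K$$(i,l) * cnj (K$$(j,m))) Ks)"

lemma choi_Nil[simp]: "choi [] i l j m = 0" by (simp add: choi_def)
lemma choi_Cons[simp]: "choi (K # Ks) i l j m = K$$(i,l) * cnj (K$$(j,m)) + choi Ks i l j m"
  by (simp add: choi_def)

lemma msum_Nil[simp]: "msum d f [] = 0\<^sub>m d d" by (simp add: msum_def)
lemma msum_Cons[simp]: "msum d f (K # Ks) = f K + msum d f Ks" by (simp add: msum_def)

lemma msum_carrier: "(\<forall>K\<in>set Ks. f K \<in> carrier_mat d d) \<Longrightarrow> msum d f Ks \<in> carrier_mat d d"
  by (induction Ks) auto

lemma msum_entry: "(\<forall>K\<in>set Ks. f K \<in> carrier_mat d d) \<Longrightarrow> i < d \<Longrightarrow> j < d \<Longrightarrow>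
  msum d f Ks $$ (i,j) = sum_list (map (\<lambda>K. f K $$ (i,j)) Ks)"
proof (induction Ks)
  case Nil then show ?case by simp
next
  case (Cons K Ks)
  then have "msum d f Ks \<in> carrier_mat d d" using msum_carrier by auto
  then show ?case using Cons by auto
qed

lemma sand_carrier: "K \<in> carrier_mat 2 2 \<Longrightarrow> \<rho> \<in> carrier_mat 2 2 \<Longrightarrow> K * \<rho> * mat_adjoint K \<in> carrier_mat 2 2"
  using mult_carrier_mat[OF mult_carrier_mat adj_carrier] by blast

lemma kraus_entry:
  assumes Ks: "\<forall>K\<in>set Ks. K \<in> carrier_mat 2 2" and r: "\<rho> \<in> carrier_mat 2 2" and ij: "i < 2" "j < 2"
  shows "kraus_apply 2 Ks \<rho> $$ (i,j) = \<rho>$$(0,0) * choi Ks i 0 j 0 + \<rho>$$(0,1) * choi Ks i 0 j 1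
     + \<rho>$$(1,0) * choi Ks i 1 j 0 + \<rho>$$(1,1) * choi Ks i 1 j 1"
  using Ks
proof (induction Ks)
  case Nil then show ?case using ij by (simp add: kraus_apply_def)
next
  case (Cons K Ks)
  have c: "\<forall>K\<in>set Ks. K * \<rho> * mat_adjoint K \<in> carrier_mat 2 2" using Cons.prems sand_carrier r by auto
  have "kraus_apply 2 (K # Ks) \<rho> $$ (i,j) = (K * \<rho> * mat_adjoint K) $$ (i,j) + kraus_apply 2 Ks \<rho> $$ (i,j)"
    unfolding kraus_apply_def using msum_carrier[OF c] ij by simp
  then show ?case using Cons sandwich_entry[OF _ r ij, of K] by (simp add: algebra_simps)
qed

lemma kraus_carrier: "\<forall>K\<in>set Ks. K \<in> carrier_mat 2 2 \<Longrightarrow> \<rho> \<in> carrier_mat 2 2 \<Longrightarrow> kraus_apply 2 Ks \<rho> \<in> carrier_mat 2 2"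
  unfolding kraus_apply_def by (rule msum_carrier) (auto simp: sand_carrier)

lemma kraus_eq:
  assumes Ks: "\<forall>K\<in>set Ks. K \<in> carrier_mat 2 2" and Ls: "\<forall>K\<in>set Ls. K \<in> carrier_mat 2 2"
    and ch: "\<And>i l j m. i < 2 \<Longrightarrow> l < 2 \<Longrightarrow> j < 2 \<Longrightarrow> m < 2 \<Longrightarrow> choi Ks i l j m = choi Ls i l j m"
    and r: "\<rho> \<in> carrier_mat 2 2"
  shows "kraus_apply 2 Ks \<rho> = kraus_apply 2 Ls \<rho>"
proof (rule eq_matI)
  show "dim_row (kraus_apply 2 Ks \<rho>) = dim_row (kraus_apply 2 Ls \<rho>)"
    using kraus_carrier[OF Ks r] kraus_carrier[OF Ls r] by auto
  show "dim_col (kraus_apply 2 Ks \<rho>) = dim_col (kraus_apply 2 Ls \<rho>)"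
    using kraus_carrier[OF Ks r] kraus_carrier[OF Ls r] by auto
  fix i j assume "i < dim_row (kraus_apply 2 Ls \<rho>)" "j < dim_col (kraus_apply 2 Ls \<rho>)"
  then have ij: "i < 2" "j < 2" using kraus_carrier[OF Ls r] by auto
  show "kraus_apply 2 Ks \<rho> $$ (i,j) = kraus_apply 2 Ls \<rho> $$ (i,j)"
    unfolding kraus_entry[OF Ks r ij] kraus_entry[OF Ls r ij] using ch ij by simp
qed

lemma choi_diag: "choi Ks i l i l = of_real (sum_list (map (\<lambda>K. (cmod (K$$(i,l)))\<^sup>2) Ks))"
  by (induction Ks) (auto simp: ncs)

lemma choi_cnj: "choi Ks j m i l = cnj (choi Ks i l j m)"
  by (induction Ks) auto

lemma TP_entries:
  assumes Ks: "\<forall>K\<in>set Ks. K \<in> carrier_mat 2 2" and tp: "msum 2 (\<lambda>K. mat_adjoint K * K) Ks = 1\<^sub>m 2"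
  shows "choi Ks 0 0 0 0 + choi Ks 1 0 1 0 = 1" "choi Ks 0 1 0 1 + choi Ks 1 1 1 1 = 1"
    "choi Ks 0 0 0 1 + choi Ks 1 0 1 1 = 0"
proof -
  have c: "\<forall>K\<in>set Ks. mat_adjoint K * K \<in> carrier_mat 2 2"
    using Ks adj_carrier mult_carrier_mat by blast
  have e: "sum_list (map (\<lambda>K. cnj (K$$(0,l)) * K$$(0,m) + cnj (K$$(1,l)) * K$$(1,m)) Ks) = (if l = m then 1 else 0)"
    if "l < 2" "m < 2" for l m
  proof -
    have "msum 2 (\<lambda>K. mat_adjoint K * K) Ks $$ (l,m) = (if l = m then 1 else 0)" using tp that by simp
    moreover have "map (\<lambda>K. (mat_adjoint K * K) $$ (l,m)) Ks = map (\<lambda>K. cnj (K$$(0,l)) * K$$(0,m) + cnj (K$$(1,l)) * K$$(1,m)) Ks"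
      using KdK_entry Ks that by auto
    ultimately show ?thesis using msum_entry[OF c that] by simp
  qed
  have g: "choi Ks 0 l 0 m + choi Ks 1 l 1 m = sum_list (map (\<lambda>K. cnj (K$$(0,m)) * K$$(0,l) + cnj (K$$(1,m)) * K$$(1,l)) Ks)" for l m
    by (induction Ks) (auto simp: algebra_simps)
  show "choi Ks 0 0 0 0 + choi Ks 1 0 1 0 = 1" using g[of 0 0] e[of 0 0] by simp
  show "choi Ks 0 1 0 1 + choi Ks 1 1 1 1 = 1" using g[of 1 1] e[of 1 1] by simp
  show "choi Ks 0 0 0 1 + choi Ks 1 0 1 1 = 0" using g[of 0 1] e[of 1 0] by simp
qed



lemma add_cs:
  fixes a b a' b' :: real and x y :: complex
  assumes "0 \<le> a" "0 \<le> b" "0 \<le> a'" "0 \<le> b'" "(cmod x)\<^sup>2 \<le> a*b" "(cmod y)\<^sup>2 \<le> a'*b'"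
  shows "(cmod (x+y))\<^sup>2 \<le> (a+a')*(b+b')"
proof -
  define u where "u = cmod x"
  define v where "v = cmod y"
  have uv: "0 \<le> u" "0 \<le> v" unfolding u_def v_def by auto
  have h1: "u\<^sup>2 \<le> a*b" "v\<^sup>2 \<le> a'*b'" using assms(5,6) unfolding u_def v_def by auto
  have h2: "u\<^sup>2 * v\<^sup>2 \<le> (a*b)*(a'*b')" by (rule mult_mono) (use h1 assms(1,2) in auto)
  have h3: "(2*u*v)\<^sup>2 = 4*(u\<^sup>2 * v\<^sup>2)" by (simp add: power2_eq_square algebra_simps)
  have h4: "(a*b'+a'*b)\<^sup>2 - 4*((a*b)*(a'*b')) = (a*b'-a'*b)\<^sup>2" by (simp add: power2_eq_square algebra_simps)
  have h5: "0 \<le> (a*b'-a'*b)\<^sup>2" by simp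
  have "(2*u*v)\<^sup>2 \<le> (a*b'+a'*b)\<^sup>2" using h2 h3 h4 h5 by linarith
  then have h6: "2*u*v \<le> a*b' + a'*b"
    by (rule power2_le_imp_le) (use assms in auto)
  have "cmod (x+y) \<le> u + v" unfolding u_def v_def by (rule norm_triangle_ineq)
  then have h7: "(cmod (x+y))\<^sup>2 \<le> (u+v)\<^sup>2" by (rule power_mono) simp
  have h8: "(u+v)\<^sup>2 = u\<^sup>2 + 2*u*v + v\<^sup>2" by (simp add: power2_eq_square algebra_simps)
  have h9: "(a+a')*(b+b') = a*b + (a*b' + a'*b) + a'*b'" by (simp add: power2_eq_square algebra_simps)
  show ?thesis using h1 h6 h7 h8 h9 by linarith
qed

lemma Hdiv:
  fixes c a b A :: real
  assumes "0 \<le> c" "c \<le> a*b" "0 \<le> a" "0 \<le> b" "a \<le> A"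
  shows "0 \<le> c/A \<and> c/A \<le> b \<and> A*(c/A) = c"
proof (cases "c = 0")
  case True then show ?thesis using assms by simp
next
  case False
  then have "a * b > 0" using assms by linarith
  then have ap: "a > 0" using assms by (metis mult_zero_left order_less_irrefl order_le_less)
  then have Ap: "A > 0" using assms by linarith
  have "c/A \<le> c/a" using ap Ap assms by (intro divide_left_mono) auto
  also have "c/a \<le> b" using ap assms by (simp add: divide_le_eq mult.commute)
  finally show ?thesis using Ap assms by auto
qed

lemma Hmono:
  fixes c a b A A' :: real
  assumes "0 \<le> c" "c \<le> a*b" "0 \<le> a" "0 \<le> b" "a \<le> A'" "A' \<le> A"
  shows "c/A \<le> c/A'"
proof (cases "c = 0")
  case True then show ?thesis by simp
next
  case False
  then have "a * b > 0" using assms by linarith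
  then have ap: "a > 0" using assms by (metis mult_zero_left order_less_irrefl order_le_less)
  then show ?thesis using assms by (intro divide_left_mono) auto
qed

lemma cycle:
  fixes \<alpha>1 \<alpha>2 \<alpha>3 \<alpha>4 \<beta>1 \<beta>2 \<beta>3 \<beta>4 c1 c2 c3 c4 D11 D12 D21 D22 :: real
  assumes nn: "0 \<le> \<alpha>1" "0 \<le> \<alpha>2" "0 \<le> \<alpha>3" "0 \<le> \<alpha>4" "0 \<le> \<beta>1" "0 \<le> \<beta>2" "0 \<le> \<beta>3" "0 \<le> \<beta>4"
    and cn: "0 \<le> c1" "0 \<le> c2" "0 \<le> c3" "0 \<le> c4"
    and s: "\<alpha>1 + \<alpha>3 = D11" "\<beta>1 + \<beta>4 = D12" "\<alpha>2 + \<alpha>4 = D21" "\<beta>2 + \<beta>3 = D22"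
    and cb: "c1 \<le> \<alpha>1*\<beta>1" "c2 \<le> \<alpha>2*\<beta>2" "c3 \<le> \<alpha>3*\<beta>3" "c4 \<le> \<alpha>4*\<beta>4"
  shows "\<exists>A1 A2 A3 A4 B1 B2 B3 B4. 0 \<le> A1 \<and> 0 \<le> A2 \<and> 0 \<le> A3 \<and> 0 \<le> A4 \<and>
     0 \<le> B1 \<and> 0 \<le> B2 \<and> 0 \<le> B3 \<and> 0 \<le> B4 \<and>
     A1 + A3 = D11 \<and> B1 + B4 = D12 \<and> A2 + A4 = D21 \<and> B2 + B3 = D22 \<and>
     A1*B1 = c1 \<and> A2*B2 = c2 \<and> A3*B3 = c3 \<and> A4*B4 = c4"
proof -
  have cb': "c2 \<le> \<beta>2*\<alpha>2" "c1 \<le> \<beta>1*\<alpha>1" using cb by (simp_all add: mult.commute)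
  define A3f where "A3f t = D11 - t" for t
  define B3f where "B3f t = c3 / A3f t" for t
  define B2f where "B2f t = D22 - B3f t" for t
  define A2f where "A2f t = c2 / B2f t" for t
  define A4f where "A4f t = D21 - A2f t" for t
  define B4f where "B4f t = c4 / A4f t" for t
  define B1f where "B1f t = D12 - B4f t" for t
  define g where "g t = c1 / B1f t" for t
  have P: "\<alpha>3 \<le> A3f t \<and> 0 \<le> B3f t \<and> B3f t \<le> \<beta>3 \<and> A3f t * B3f t = c3 \<and>
      \<beta>2 \<le> B2f t \<and> 0 \<le> A2f t \<and> A2f t \<le> \<alpha>2 \<and> B2f t * A2f t = c2 \<and>
      \<alpha>4 \<le> A4f t \<and> 0 \<le> B4f t \<and> B4f t \<le> \<beta>4 \<and> A4f t * B4f t = c4 \<and>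
      \<beta>1 \<le> B1f t \<and> 0 \<le> g t \<and> g t \<le> \<alpha>1 \<and> B1f t * g t = c1"
    if t: "0 \<le> t" "t \<le> \<alpha>1" for t
  proof -
    have a3: "\<alpha>3 \<le> A3f t" unfolding A3f_def using t s by linarith
    note h3 = Hdiv[OF cn(3) cb(3) nn(3) nn(7) a3, folded B3f_def]
    have b2: "\<beta>2 \<le> B2f t" unfolding B2f_def using h3 s by linarith
    note h2 = Hdiv[OF cn(2) cb'(1) nn(6) nn(2) b2, folded A2f_def]
    have a4: "\<alpha>4 \<le> A4f t" unfolding A4f_def using h2 s by linarith
    note h4 = Hdiv[OF cn(4) cb(4) nn(4) nn(8) a4, folded B4f_def]
    have b1: "\<beta>1 \<le> B1f t" unfolding B1f_def using h4 s by linarith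
    note h1 = Hdiv[OF cn(1) cb'(2) nn(5) nn(1) b1, folded g_def]
    show ?thesis using a3 h3 b2 h2 a4 h4 b1 h1 by blast
  qed
  have M: "g t \<le> g t'" if "0 \<le> t" "t \<le> t'" "t' \<le> \<alpha>1" for t t'
  proof -
    have Pt: "0 \<le> t'" using that by linarith
    note p = P[OF that(1) order_trans[OF that(2,3)]] and p' = P[OF Pt that(3)]
    have "A3f t' \<le> A3f t" unfolding A3f_def using that by simp
    then have "B3f t \<le> B3f t'" unfolding B3f_def using Hmono[OF cn(3) cb(3) nn(3) nn(7)] p' by blast
    then have "B2f t' \<le> B2f t" unfolding B2f_def by simp
    then have "A2f t \<le> A2f t'" unfolding A2f_def using Hmono[OF cn(2) cb'(1) nn(6) nn(2)] p' by blast
    then have "A4f t' \<le> A4f t" unfolding A4f_def by simp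
    then have "B4f t \<le> B4f t'" unfolding B4f_def using Hmono[OF cn(4) cb(4) nn(4) nn(8)] p' by blast
    then have "B1f t' \<le> B1f t" unfolding B1f_def by simp
    then show "g t \<le> g t'" unfolding g_def using Hmono[OF cn(1) cb'(2) nn(5) nn(1)] p' by blast
  qed
  define S where "S = {t. 0 \<le> t \<and> t \<le> \<alpha>1 \<and> t \<le> g t}"
  define sp where "sp = Sup S"
  have S0: "0 \<in> S" unfolding S_def using P[of 0] nn by auto
  have bdd: "bdd_above S" unfolding S_def bdd_above_def by auto
  have sp0: "0 \<le> sp" unfolding sp_def using cSup_upper[OF S0 bdd] .
  have sp1: "sp \<le> \<alpha>1" unfolding sp_def using S0 by (intro cSup_least) (auto simp: S_def)
  have sg: "sp \<le> g sp" unfolding sp_def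
  proof (rule cSup_least)
    show "S \<noteq> {}" using S0 by auto
    fix t assume "t \<in> S"
    then have t: "0 \<le> t" "t \<le> \<alpha>1" "t \<le> g t" unfolding S_def by auto
    have "t \<le> sp" unfolding sp_def using cSup_upper[OF \<open>t \<in> S\<close> bdd] .
    then have "g t \<le> g sp" using M[OF t(1) _ sp1] by simp
    then show "t \<le> g (Sup S)" using t unfolding sp_def by simp
  qed
  have gs: "0 \<le> g sp" "g sp \<le> \<alpha>1" using P[OF sp0 sp1] by auto
  have "g sp \<le> g (g sp)" using M[OF sp0 sg gs(2)] .
  then have "g sp \<in> S" unfolding S_def using gs by auto
  then have "g sp \<le> sp" unfolding sp_def using cSup_upper[OF _ bdd] by blast
  with sg have fx: "g sp = sp" by simp
  note p = P[OF sp0 sp1]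
  show ?thesis
    apply (rule exI[of _ sp], rule exI[of _ "A2f sp"], rule exI[of _ "A3f sp"], rule exI[of _ "A4f sp"])
    apply (rule exI[of _ "B1f sp"], rule exI[of _ "B2f sp"], rule exI[of _ "B3f sp"], rule exI[of _ "B4f sp"])
    using p fx sp0 nn
    by (simp add: A3f_def[of sp] B2f_def[of sp] A4f_def[of sp] B1f_def[of sp] mult.commute)
qed

lemma split_x:
  fixes A B :: real and x :: complex
  assumes "0 \<le> A" "0 \<le> B" "A * B = (cmod x)\<^sup>2"
  shows "\<exists>(a::real) (b::complex). a\<^sup>2 = A \<and> (cmod b)\<^sup>2 = B \<and> of_real a * cnj b = x"
proof (cases "A = 0")
  case True
  then have "x = 0" using assms by simp
  then show ?thesis using True assms
    by (intro exI[of _ 0] exI[of _ "of_real (sqrt B)"]) simp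
next
  case False
  then have Ap: "A > 0" using assms by simp
  define a where "a = sqrt A"
  have ap: "a > 0" "a\<^sup>2 = A" using Ap unfolding a_def by auto
  define b where "b = cnj x / of_real a"
  have "(cmod b)\<^sup>2 = (cmod x)\<^sup>2 / A" unfolding b_def using ap by (simp add: norm_divide power_divide)
  also have "\<dots> = B" using assms Ap by (simp add: field_simps)
  finally have "(cmod b)\<^sup>2 = B" .
  moreover have "of_real a * cnj b = x" unfolding b_def using ap by simp
  ultimately show ?thesis using ap by blast
qed



definition dd :: "complex mat list \<Rightarrow> nat \<Rightarrow> nat \<Rightarrow> real" where
  "dd Ks i l = sum_list (map (\<lambda>K. (cmod (K$$(i,l)))\<^sup>2) Ks)"

lemma dd_Nil[simp]: "dd [] i l = 0" by (simp add: dd_def)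
lemma dd_Cons[simp]: "dd (K # Ks) i l = (cmod (K$$(i,l)))\<^sup>2 + dd Ks i l" by (simp add: dd_def)
lemma dd_nonneg: "0 \<le> dd Ks i l" unfolding dd_def by (induction Ks) auto

lemma cs_single: "(cmod (p * cnj q))\<^sup>2 \<le> (cmod p)\<^sup>2 * (cmod q)\<^sup>2"
  by (simp add: norm_mult power_mult_distrib)

lemma decomp:
  assumes "\<forall>K\<in>set Ks. K$$(0,0) * K$$(1,0) = 0 \<and> K$$(0,1) * K$$(1,1) = 0"
  shows "\<exists>\<alpha>1 \<alpha>2 \<alpha>3 \<alpha>4 \<beta>1 \<beta>2 \<beta>3 \<beta>4. 0 \<le> \<alpha>1 \<and> 0 \<le> \<alpha>2 \<and> 0 \<le> \<alpha>3 \<and> 0 \<le> \<alpha>4 \<and>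
     0 \<le> \<beta>1 \<and> 0 \<le> \<beta>2 \<and> 0 \<le> \<beta>3 \<and> 0 \<le> \<beta>4 \<and>
     \<alpha>1 + \<alpha>3 = dd Ks 0 0 \<and> \<beta>1 + \<beta>4 = dd Ks 0 1 \<and> \<alpha>2 + \<alpha>4 = dd Ks 1 0 \<and> \<beta>2 + \<beta>3 = dd Ks 1 1 \<and>
     (cmod (choi Ks 0 0 0 1))\<^sup>2 \<le> \<alpha>1*\<beta>1 \<and> (cmod (choi Ks 1 0 1 1))\<^sup>2 \<le> \<alpha>2*\<beta>2 \<and>
     (cmod (choi Ks 0 0 1 1))\<^sup>2 \<le> \<alpha>3*\<beta>3 \<and> (cmod (choi Ks 1 0 0 1))\<^sup>2 \<le> \<alpha>4*\<beta>4"
  using assms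
proof (induction Ks)
  case Nil then show ?case by (intro exI[of _ "0::real"]) simp
next
  case (Cons K Ks)
  have pr: "\<forall>K\<in>set Ks. K$$(0,0) * K$$(1,0) = 0 \<and> K$$(0,1) * K$$(1,1) = 0" using Cons.prems by simp
  from Cons.IH[OF pr] obtain a1 a2 a3 a4 b1 b2 b3 b4 where HH: "(0 \<le> a1) \<and> (0 \<le> a2) \<and> (0 \<le> a3) \<and> (0 \<le> a4) \<and> (0 \<le> b1) \<and> (0 \<le> b2) \<and> (0 \<le> b3) \<and> (0 \<le> b4) \<and> (a1 + a3 = dd Ks 0 0) \<and> (b1 + b4 = dd Ks 0 1) \<and> (a2 + a4 = dd Ks 1 0) \<and> (b2 + b3 = dd Ks 1 1) \<and> ((cmod (choi Ks 0 0 0 1))\<^sup>2 \<le> a1*b1) \<and> ((cmod (choi Ks 1 0 1 1))\<^sup>2 \<le> a2*b2) \<and> ((cmod (choi Ks 0 0 1 1))\<^sup>2 \<le> a3*b3) \<and> ((cmod (choi Ks 1 0 0 1))\<^sup>2 \<le> a4*b4)" by (elim exE) (erule that)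
  have H: "0 \<le> a1" "0 \<le> a2" "0 \<le> a3" "0 \<le> a4"      "0 \<le> b1" "0 \<le> b2" "0 \<le> b3" "0 \<le> b4"      "a1 + a3 = dd Ks 0 0" "b1 + b4 = dd Ks 0 1" "a2 + a4 = dd Ks 1 0" "b2 + b3 = dd Ks 1 1"      "(cmod (choi Ks 0 0 0 1))\<^sup>2 \<le> a1*b1" "(cmod (choi Ks 1 0 1 1))\<^sup>2 \<le> a2*b2"      "(cmod (choi Ks 0 0 1 1))\<^sup>2 \<le> a3*b3" "(cmod (choi Ks 1 0 0 1))\<^sup>2 \<le> a4*b4" using HH by auto
  have z: "K$$(0,0) * K$$(1,0) = 0" "K$$(0,1) * K$$(1,1) = 0" using Cons.prems by auto
  define n00 where "n00 = (cmod (K$$(0,0)))\<^sup>2"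
  define n01 where "n01 = (cmod (K$$(0,1)))\<^sup>2"
  define n10 where "n10 = (cmod (K$$(1,0)))\<^sup>2"
  define n11 where "n11 = (cmod (K$$(1,1)))\<^sup>2"
  have nn: "0 \<le> n00" "0 \<le> n01" "0 \<le> n10" "0 \<le> n11" unfolding n00_def n01_def n10_def n11_def by auto
  have cs: "(cmod (K$$(0,0) * cnj (K$$(0,1))))\<^sup>2 \<le> n00 * n01"
     "(cmod (K$$(1,0) * cnj (K$$(1,1))))\<^sup>2 \<le> n10 * n11"
     "(cmod (K$$(0,0) * cnj (K$$(1,1))))\<^sup>2 \<le> n00 * n11"
     "(cmod (K$$(1,0) * cnj (K$$(0,1))))\<^sup>2 \<le> n10 * n01"
    unfolding n00_def n01_def n10_def n11_def by (rule cs_single)+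
  have ac1: "(cmod (K$$(0,0) * cnj (K$$(0,1)) + choi Ks 0 0 0 1))\<^sup>2 \<le> (n00 + a1) * (n01 + b1)"
    by (rule add_cs[OF nn(1,2) H(1,5) cs(1) H(13)])
  have ac2: "(cmod (K$$(1,0) * cnj (K$$(1,1)) + choi Ks 1 0 1 1))\<^sup>2 \<le> (n10 + a2) * (n11 + b2)"
    by (rule add_cs[OF nn(3,4) H(2,6) cs(2) H(14)])
  have ac3: "(cmod (K$$(0,0) * cnj (K$$(1,1)) + choi Ks 0 0 1 1))\<^sup>2 \<le> (n00 + a3) * (n11 + b3)"
    by (rule add_cs[OF nn(1,4) H(3,7) cs(3) H(15)])
  have ac4: "(cmod (K$$(1,0) * cnj (K$$(0,1)) + choi Ks 1 0 0 1))\<^sup>2 \<le> (n10 + a4) * (n01 + b4)"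
    by (rule add_cs[OF nn(3,2) H(4,8) cs(4) H(16)])
  have n0: "K$$(i,l) = 0 \<Longrightarrow> (cmod (K$$(i,l)))\<^sup>2 = 0" for i l by simp
  consider "K$$(1,0) = 0" "K$$(1,1) = 0" | "K$$(0,0) = 0" "K$$(0,1) = 0" | "K$$(1,0) = 0" "K$$(0,1) = 0"
    | "K$$(0,0) = 0" "K$$(1,1) = 0" using z by auto
  then show ?case
  proof cases
    case 1
    have e: "K$$(1,0) = 0" "K$$(1,1) = 0" using 1 by auto
    have nz: "(cmod (K$$(1,0)))\<^sup>2 = 0" "(cmod (K$$(1,1)))\<^sup>2 = 0" using e by simp_all
    have ch: "choi (K # Ks) 0 0 0 1 = K$$(0,0) * cnj (K$$(0,1)) + choi Ks 0 0 0 1"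
      "choi (K # Ks) 1 0 1 1 = K$$(1,0) * cnj (K$$(1,1)) + choi Ks 1 0 1 1"
      "choi (K # Ks) 0 0 1 1 = K$$(0,0) * cnj (K$$(1,1)) + choi Ks 0 0 1 1"
      "choi (K # Ks) 1 0 0 1 = K$$(1,0) * cnj (K$$(0,1)) + choi Ks 1 0 0 1"
      "dd (K # Ks) 0 0 = n00 + dd Ks 0 0" "dd (K # Ks) 0 1 = n01 + dd Ks 0 1"
      "dd (K # Ks) 1 0 = n10 + dd Ks 1 0" "dd (K # Ks) 1 1 = n11 + dd Ks 1 1"
      unfolding n00_def n01_def n10_def n11_def by simp_all
    have nzz: "n00 = 0 \<or> True" using nz unfolding n00_def n01_def n10_def n11_def by simp
    show ?thesis
      apply (rule exI[of _ "n00 + a1"], rule exI[of _ "a2"], rule exI[of _ "a3"], rule exI[of _ "a4"], rule exI[of _ "n01 + b1"], rule exI[of _ "b2"], rule exI[of _ "b3"], rule exI[of _ "b4"])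
      apply (unfold ch)
      apply (insert H nn ac1 e nz[folded n00_def n01_def n10_def n11_def])
      apply (intro conjI)
      apply simp_all
      done
  next
    case 2
    have e: "K$$(0,0) = 0" "K$$(0,1) = 0" using 2 by auto
    have nz: "(cmod (K$$(0,0)))\<^sup>2 = 0" "(cmod (K$$(0,1)))\<^sup>2 = 0" using e by simp_all
    have ch: "choi (K # Ks) 0 0 0 1 = K$$(0,0) * cnj (K$$(0,1)) + choi Ks 0 0 0 1"
      "choi (K # Ks) 1 0 1 1 = K$$(1,0) * cnj (K$$(1,1)) + choi Ks 1 0 1 1"
      "choi (K # Ks) 0 0 1 1 = K$$(0,0) * cnj (K$$(1,1)) + choi Ks 0 0 1 1"
      "choi (K # Ks) 1 0 0 1 = K$$(1,0) * cnj (K$$(0,1)) + choi Ks 1 0 0 1"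
      "dd (K # Ks) 0 0 = n00 + dd Ks 0 0" "dd (K # Ks) 0 1 = n01 + dd Ks 0 1"
      "dd (K # Ks) 1 0 = n10 + dd Ks 1 0" "dd (K # Ks) 1 1 = n11 + dd Ks 1 1"
      unfolding n00_def n01_def n10_def n11_def by simp_all
    have nzz: "n00 = 0 \<or> True" using nz unfolding n00_def n01_def n10_def n11_def by simp
    show ?thesis
      apply (rule exI[of _ "a1"], rule exI[of _ "n10 + a2"], rule exI[of _ "a3"], rule exI[of _ "a4"], rule exI[of _ "b1"], rule exI[of _ "n11 + b2"], rule exI[of _ "b3"], rule exI[of _ "b4"])
      apply (unfold ch)
      apply (insert H nn ac2 e nz[folded n00_def n01_def n10_def n11_def])
      apply (intro conjI)
      apply simp_all
      done
  next
    case 3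
    have e: "K$$(1,0) = 0" "K$$(0,1) = 0" using 3 by auto
    have nz: "(cmod (K$$(1,0)))\<^sup>2 = 0" "(cmod (K$$(0,1)))\<^sup>2 = 0" using e by simp_all
    have ch: "choi (K # Ks) 0 0 0 1 = K$$(0,0) * cnj (K$$(0,1)) + choi Ks 0 0 0 1"
      "choi (K # Ks) 1 0 1 1 = K$$(1,0) * cnj (K$$(1,1)) + choi Ks 1 0 1 1"
      "choi (K # Ks) 0 0 1 1 = K$$(0,0) * cnj (K$$(1,1)) + choi Ks 0 0 1 1"
      "choi (K # Ks) 1 0 0 1 = K$$(1,0) * cnj (K$$(0,1)) + choi Ks 1 0 0 1"
      "dd (K # Ks) 0 0 = n00 + dd Ks 0 0" "dd (K # Ks) 0 1 = n01 + dd Ks 0 1"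
      "dd (K # Ks) 1 0 = n10 + dd Ks 1 0" "dd (K # Ks) 1 1 = n11 + dd Ks 1 1"
      unfolding n00_def n01_def n10_def n11_def by simp_all
    have nzz: "n00 = 0 \<or> True" using nz unfolding n00_def n01_def n10_def n11_def by simp
    show ?thesis
      apply (rule exI[of _ "a1"], rule exI[of _ "a2"], rule exI[of _ "n00 + a3"], rule exI[of _ "a4"], rule exI[of _ "b1"], rule exI[of _ "b2"], rule exI[of _ "n11 + b3"], rule exI[of _ "b4"])
      apply (unfold ch)
      apply (insert H nn ac3 e nz[folded n00_def n01_def n10_def n11_def])
      apply (intro conjI)
      apply simp_all
      done
  next
    case 4
    have e: "K$$(0,0) = 0" "K$$(1,1) = 0" using 4 by auto
    have nz: "(cmod (K$$(0,0)))\<^sup>2 = 0" "(cmod (K$$(1,1)))\<^sup>2 = 0" using e by simp_all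
    have ch: "choi (K # Ks) 0 0 0 1 = K$$(0,0) * cnj (K$$(0,1)) + choi Ks 0 0 0 1"
      "choi (K # Ks) 1 0 1 1 = K$$(1,0) * cnj (K$$(1,1)) + choi Ks 1 0 1 1"
      "choi (K # Ks) 0 0 1 1 = K$$(0,0) * cnj (K$$(1,1)) + choi Ks 0 0 1 1"
      "choi (K # Ks) 1 0 0 1 = K$$(1,0) * cnj (K$$(0,1)) + choi Ks 1 0 0 1"
      "dd (K # Ks) 0 0 = n00 + dd Ks 0 0" "dd (K # Ks) 0 1 = n01 + dd Ks 0 1"
      "dd (K # Ks) 1 0 = n10 + dd Ks 1 0" "dd (K # Ks) 1 1 = n11 + dd Ks 1 1"
      unfolding n00_def n01_def n10_def n11_def by simp_all
    have nzz: "n00 = 0 \<or> True" using nz unfolding n00_def n01_def n10_def n11_def by simp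
    show ?thesis
      apply (rule exI[of _ "a1"], rule exI[of _ "a2"], rule exI[of _ "a3"], rule exI[of _ "n10 + a4"], rule exI[of _ "b1"], rule exI[of _ "b2"], rule exI[of _ "b3"], rule exI[of _ "n01 + b4"])
      apply (unfold ch)
      apply (insert H nn ac4 e nz[folded n00_def n01_def n10_def n11_def])
      apply (intro conjI)
      apply simp_all
      done
  qed
qed

lemma choi_zero:
  assumes "\<forall>K\<in>set Ks. K$$(0,0) * K$$(1,0) = 0 \<and> K$$(0,1) * K$$(1,1) = 0"
  shows "choi Ks 0 0 1 0 = 0 \<and> choi Ks 0 1 1 1 = 0"
  using assms
proof (induction Ks)
  case Nil then show ?case by simp
next
  case (Cons K Ks)
  have "K$$(0,0) * K$$(1,0) = 0" "K$$(0,1) * K$$(1,1) = 0" using Cons.prems by auto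
  then have "K$$(0,0) * cnj (K$$(1,0)) = 0" "K$$(0,1) * cnj (K$$(1,1)) = 0" by auto
  then show ?case using Cons by simp
qed

lemma mr_carrier: "mat_of_rows_list 2 [[a,b],[c,d]] \<in> carrier_mat 2 2"
proof -
  have "length [[a,b],[c,d]] = 2" by simp
  then show ?thesis unfolding mat_of_rows_list_def by (metis mat_carrier)
qed

lemma mr_idx: "mat_of_rows_list 2 [[a,b],[c,d]] $$ (0,0) = a" "mat_of_rows_list 2 [[a,b],[c,d]] $$ (0,1) = b"
  "mat_of_rows_list 2 [[a,b],[c,d]] $$ (1,0) = c" "mat_of_rows_list 2 [[a,b],[c,d]] $$ (1,1) = d"
  by (simp_all add: mat_of_rows_list_def)

lemma mr_idx2: "mat_of_rows_list 2 [[a,b],[c,d]] $$ (0,Suc 0) = b"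
  "mat_of_rows_list 2 [[a,b],[c,d]] $$ (Suc 0,0) = c" "mat_of_rows_list 2 [[a,b],[c,d]] $$ (Suc 0,Suc 0) = d"
  by (simp_all add: mat_of_rows_list_def)

lemma choi_dd: "choi Ks i l i l = of_real (dd Ks i l)"
  by (simp add: choi_diag dd_def)

theorem proposition1:
  fixes \<Phi> :: "complex mat \<Rightarrow> complex mat"
  assumes "IO 2 \<Phi>"
  shows "\<exists>(a1::real) a2 a3 a4 (b1::complex) b2 b3 b4.
    a1\<^sup>2 + a2\<^sup>2 + a3\<^sup>2 + a4\<^sup>2 = 1 \<and>
    (cmod b1)\<^sup>2 + (cmod b2)\<^sup>2 + (cmod b3)\<^sup>2 + (cmod b4)\<^sup>2 = 1 \<and>
    complex_of_real a1 * b1 + complex_of_real a2 * b2 = 0 \<and>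
    (let K1 = mat_of_rows_list 2 [[complex_of_real a1, b1], [0, 0]];
         K2 = mat_of_rows_list 2 [[0, 0], [complex_of_real a2, b2]];
         K3 = mat_of_rows_list 2 [[complex_of_real a3, 0], [0, b3]];
         K4 = mat_of_rows_list 2 [[0, b4], [complex_of_real a4, 0]]
     in (\<forall>K\<in>set [K1, K2, K3, K4]. incoherent_kraus 2 K) \<and>
        (\<forall>\<rho>\<in>carrier_mat 2 2. \<Phi> \<rho> = kraus_apply 2 [K1, K2, K3, K4] \<rho>))"
proof -
  obtain Ks where KS: "(\<forall>K\<in>set Ks. incoherent_kraus 2 K) \<and> msum 2 (\<lambda>K. mat_adjoint K * K) Ks = 1\<^sub>m 2 \<and>
      (\<forall>\<rho>\<in>carrier_mat 2 2. \<Phi> \<rho> = kraus_apply 2 Ks \<rho>)"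
    using assms unfolding IO_def by (elim exE) (erule that)
  have inc: "\<forall>K\<in>set Ks. incoherent_kraus 2 K" using KS by (rule conjunct1)
  have tp: "msum 2 (\<lambda>K. mat_adjoint K * K) Ks = 1\<^sub>m 2" using KS by (metis conjunct1 conjunct2)
  have eq: "\<forall>\<rho>\<in>carrier_mat 2 2. \<Phi> \<rho> = kraus_apply 2 Ks \<rho>" using KS by (metis conjunct2)
  have Kc: "\<forall>K\<in>set Ks. K \<in> carrier_mat 2 2" using inc inc_nec(1) by simp
  have Kz: "\<forall>K\<in>set Ks. K$$(0,0)*K$$(1,0) = 0 \<and> K$$(0,1)*K$$(1,1) = 0" using inc inc_nec(2,3) by simp
  define x1 where "x1 = choi Ks 0 0 0 1"
  define x2 where "x2 = choi Ks 1 0 1 1"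
  define x3 where "x3 = choi Ks 0 0 1 1"
  define x4 where "x4 = choi Ks 1 0 0 1"
  from decomp[OF Kz] obtain al1 al2 al3 al4 be1 be2 be3 be4 where DD:
    "0 \<le> al1 \<and> 0 \<le> al2 \<and> 0 \<le> al3 \<and> 0 \<le> al4 \<and>
     0 \<le> be1 \<and> 0 \<le> be2 \<and> 0 \<le> be3 \<and> 0 \<le> be4 \<and>
     al1 + al3 = dd Ks 0 0 \<and> be1 + be4 = dd Ks 0 1 \<and> al2 + al4 = dd Ks 1 0 \<and> be2 + be3 = dd Ks 1 1 \<and>
     (cmod (choi Ks 0 0 0 1))\<^sup>2 \<le> al1*be1 \<and> (cmod (choi Ks 1 0 1 1))\<^sup>2 \<le> al2*be2 \<and>
     (cmod (choi Ks 0 0 1 1))\<^sup>2 \<le> al3*be3 \<and> (cmod (choi Ks 1 0 0 1))\<^sup>2 \<le> al4*be4"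
    by (elim exE) (erule that)
  have "\<exists>A1 A2 A3 A4 B1 B2 B3 B4. 0 \<le> A1 \<and> 0 \<le> A2 \<and> 0 \<le> A3 \<and> 0 \<le> A4 \<and>
     0 \<le> B1 \<and> 0 \<le> B2 \<and> 0 \<le> B3 \<and> 0 \<le> B4 \<and>
     A1 + A3 = dd Ks 0 0 \<and> B1 + B4 = dd Ks 0 1 \<and> A2 + A4 = dd Ks 1 0 \<and> B2 + B3 = dd Ks 1 1 \<and>
     A1*B1 = (cmod x1)\<^sup>2 \<and> A2*B2 = (cmod x2)\<^sup>2 \<and> A3*B3 = (cmod x3)\<^sup>2 \<and> A4*B4 = (cmod x4)\<^sup>2"
    by (rule cycle[of al1 al2 al3 al4 be1 be2 be3 be4]) (use DD in \<open>auto simp: x1_def x2_def x3_def x4_def\<close>)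
  then obtain A1 A2 A3 A4 B1 B2 B3 B4 where AB:
    "0 \<le> A1 \<and> 0 \<le> A2 \<and> 0 \<le> A3 \<and> 0 \<le> A4 \<and>
     0 \<le> B1 \<and> 0 \<le> B2 \<and> 0 \<le> B3 \<and> 0 \<le> B4 \<and>
     A1 + A3 = dd Ks 0 0 \<and> B1 + B4 = dd Ks 0 1 \<and> A2 + A4 = dd Ks 1 0 \<and> B2 + B3 = dd Ks 1 1 \<and>
     A1*B1 = (cmod x1)\<^sup>2 \<and> A2*B2 = (cmod x2)\<^sup>2 \<and> A3*B3 = (cmod x3)\<^sup>2 \<and> A4*B4 = (cmod x4)\<^sup>2"
    by (elim exE) (erule that)
  have ABs: "A1 + A3 = dd Ks 0 0" "B1 + B4 = dd Ks 0 1" "A2 + A4 = dd Ks 1 0" "B2 + B3 = dd Ks 1 1"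
    using AB by simp_all
  have ABn: "0 \<le> A1" "0 \<le> A2" "0 \<le> A3" "0 \<le> A4" "0 \<le> B1" "0 \<le> B2" "0 \<le> B3" "0 \<le> B4"
    using AB by simp_all
  have ABp: "A1*B1 = (cmod x1)\<^sup>2" "A2*B2 = (cmod x2)\<^sup>2" "A3*B3 = (cmod x3)\<^sup>2" "A4*B4 = (cmod x4)\<^sup>2"
    using AB by simp_all
  obtain a1 b1 where ab1: "a1\<^sup>2 = A1" "(cmod b1)\<^sup>2 = B1" "of_real a1 * cnj b1 = x1"
    using split_x[OF ABn(1) ABn(5) ABp(1)] by blast
  obtain a2 b2 where ab2: "a2\<^sup>2 = A2" "(cmod b2)\<^sup>2 = B2" "of_real a2 * cnj b2 = x2"
    using split_x[OF ABn(2) ABn(6) ABp(2)] by blast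
  obtain a3 b3 where ab3: "a3\<^sup>2 = A3" "(cmod b3)\<^sup>2 = B3" "of_real a3 * cnj b3 = x3"
    using split_x[OF ABn(3) ABn(7) ABp(3)] by blast
  obtain a4 b4 where ab4: "a4\<^sup>2 = A4" "(cmod b4)\<^sup>2 = B4" "of_real a4 * cnj b4 = x4"
    using split_x[OF ABn(4) ABn(8) ABp(4)] by blast
  have T: "choi Ks 0 0 0 0 + choi Ks 1 0 1 0 = 1" "choi Ks 0 1 0 1 + choi Ks 1 1 1 1 = 1"
    "choi Ks 0 0 0 1 + choi Ks 1 0 1 1 = 0" using TP_entries[OF Kc tp] by auto
  have T1: "dd Ks 0 0 + dd Ks 1 0 = 1" using T(1) unfolding choi_dd
    by (metis of_real_add of_real_eq_1_iff)
  have T2: "dd Ks 0 1 + dd Ks 1 1 = 1" using T(2) unfolding choi_dd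
    by (metis of_real_add of_real_eq_1_iff)
  have T3: "x1 + x2 = 0" using T(3) unfolding x1_def x2_def .
  have r1a: "of_real a1 * cnj b1 = x1" and r2a: "of_real a2 * cnj b2 = x2" and r3a: "of_real a3 * cnj b3 = x3"
    using ab1 ab2 ab3 by auto
  have r4d: "b4 * of_real a4 = cnj x4" using ab4(3) by (metis complex_cnj_cnj complex_cnj_mult complex_cnj_complex_of_real mult.commute)
  have cnj_x4: "choi Ks 0 1 1 0 = cnj x4" unfolding x4_def using choi_cnj[of Ks 0 1 1 0] by simp
  have czero: "choi Ks 0 0 1 0 = 0" "choi Ks 0 1 1 1 = 0" using choi_zero[OF Kz] by auto
  define K1 where "K1 = mat_of_rows_list 2 [[complex_of_real a1, b1], [0, 0]]"
  define K2 where "K2 = mat_of_rows_list 2 [[0, 0], [complex_of_real a2, b2]]"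
  define K3 where "K3 = mat_of_rows_list 2 [[complex_of_real a3, 0], [0, b3]]"
  define K4 where "K4 = mat_of_rows_list 2 [[0, b4], [complex_of_real a4, 0]]"
  define New where "New = [K1, K2, K3, K4]"
  have Kc': "\<forall>K\<in>set New. K \<in> carrier_mat 2 2"
    by (simp add: New_def K1_def K2_def K3_def K4_def mr_carrier mr_idx mr_idx2)
  have inc': "\<forall>K\<in>set New. incoherent_kraus 2 K"
    unfolding New_def using Kc'[unfolded New_def]
    by (auto intro!: inc_suff simp: K1_def K2_def K3_def K4_def mr_carrier mr_idx mr_idx2)
  have up0: "choi Ks 0 0 0 1 = choi New 0 0 0 1"
    unfolding x1_def[symmetric] by (simp add: New_def K1_def K2_def K3_def K4_def mr_carrier mr_idx mr_idx2 r1a r2a r3a r4d czero cnj_x4)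
  have up1: "choi Ks 0 0 1 0 = choi New 0 0 1 0"
    unfolding czero(1) by (simp add: New_def K1_def K2_def K3_def K4_def mr_carrier mr_idx mr_idx2 r1a r2a r3a r4d czero cnj_x4)
  have up2: "choi Ks 0 0 1 1 = choi New 0 0 1 1"
    unfolding x3_def[symmetric] by (simp add: New_def K1_def K2_def K3_def K4_def mr_carrier mr_idx mr_idx2 r1a r2a r3a r4d czero cnj_x4)
  have up3: "choi Ks 0 1 1 0 = choi New 0 1 1 0"
    unfolding cnj_x4 by (simp add: New_def K1_def K2_def K3_def K4_def mr_carrier mr_idx mr_idx2 r1a r2a r3a r4d czero cnj_x4)
  have up4: "choi Ks 0 1 1 1 = choi New 0 1 1 1"
    unfolding czero(2) by (simp add: New_def K1_def K2_def K3_def K4_def mr_carrier mr_idx mr_idx2 r1a r2a r3a r4d czero cnj_x4)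
  have up5: "choi Ks 1 0 1 1 = choi New 1 0 1 1"
    unfolding x2_def[symmetric] by (simp add: New_def K1_def K2_def K3_def K4_def mr_carrier mr_idx mr_idx2 r1a r2a r3a r4d czero cnj_x4)
  have dn0: "choi Ks 0 1 0 0 = choi New 0 1 0 0"
    using choi_cnj[of Ks "0" "0" "0" "1"] choi_cnj[of New "0" "0" "0" "1"] up0 by simp
  have dn1: "choi Ks 1 0 0 0 = choi New 1 0 0 0"
    using choi_cnj[of Ks "0" "0" "1" "0"] choi_cnj[of New "0" "0" "1" "0"] up1 by simp
  have dn2: "choi Ks 1 1 0 0 = choi New 1 1 0 0"
    using choi_cnj[of Ks "0" "0" "1" "1"] choi_cnj[of New "0" "0" "1" "1"] up2 by simp
  have dn3: "choi Ks 1 0 0 1 = choi New 1 0 0 1"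
    using choi_cnj[of Ks "0" "1" "1" "0"] choi_cnj[of New "0" "1" "1" "0"] up3 by simp
  have dn4: "choi Ks 1 1 0 1 = choi New 1 1 0 1"
    using choi_cnj[of Ks "0" "1" "1" "1"] choi_cnj[of New "0" "1" "1" "1"] up4 by simp
  have dn5: "choi Ks 1 1 1 0 = choi New 1 1 1 0"
    using choi_cnj[of Ks "1" "0" "1" "1"] choi_cnj[of New "1" "0" "1" "1"] up5 by simp
  have dgN: "dd New 0 0 = a1\<^sup>2 + a3\<^sup>2" "dd New 0 1 = (cmod b1)\<^sup>2 + (cmod b4)\<^sup>2"
     "dd New 1 0 = a2\<^sup>2 + a4\<^sup>2" "dd New 1 1 = (cmod b2)\<^sup>2 + (cmod b3)\<^sup>2"
    by (simp_all add: New_def K1_def K2_def K3_def K4_def mr_idx mr_idx2)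
  have dg4: "dd Ks 0 0 = dd New 0 0" "dd Ks 0 1 = dd New 0 1" "dd Ks 1 0 = dd New 1 0" "dd Ks 1 1 = dd New 1 1"
    unfolding dgN ABs[symmetric] ab1(1,2) ab2(1,2) ab3(1,2) ab4(1,2) by simp_all
  have dg: "dd Ks i l = dd New i l" if "i < 2" "l < 2" for i l
    using that dg4 by (auto simp: lt2)
  have ch: "choi Ks i l j m = choi New i l j m" if "i < 2" "l < 2" "j < 2" "m < 2" for i l j m
  proof (cases "i = j \<and> l = m")
    case True then show ?thesis using dg that by (simp add: choi_dd)
  next
    case False then show ?thesis using that up0 up1 up2 up3 up4 up5 dn0 dn1 dn2 dn3 dn4 dn5
      by (auto simp: lt2)
  qed
  have keq: "\<Phi> \<rho> = kraus_apply 2 New \<rho>" if "\<rho> \<in> carrier_mat 2 2" for \<rho>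
    using eq that kraus_eq[OF Kc Kc' ch that] by auto
  have sa: "a1\<^sup>2 + a2\<^sup>2 + a3\<^sup>2 + a4\<^sup>2 = 1" unfolding ab1(1) ab2(1) ab3(1) ab4(1) using T1 ABs by linarith
  have sb: "(cmod b1)\<^sup>2 + (cmod b2)\<^sup>2 + (cmod b3)\<^sup>2 + (cmod b4)\<^sup>2 = 1" unfolding ab1(2) ab2(2) ab3(2) ab4(2) using T2 ABs by linarith
  have sab: "complex_of_real a1 * b1 + complex_of_real a2 * b2 = 0"
  proof -
    have "cnj (of_real a1 * cnj b1 + of_real a2 * cnj b2) = 0" using r1a r2a T3 by simp
    then show ?thesis by simp
  qed
  show ?thesis
    apply (rule exI[of _ a1], rule exI[of _ a2], rule exI[of _ a3], rule exI[of _ a4])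
    apply (rule exI[of _ b1], rule exI[of _ b2], rule exI[of _ b3], rule exI[of _ b4])
    unfolding Let_def K1_def[symmetric] K2_def[symmetric] K3_def[symmetric] K4_def[symmetric]
    using sa sb sab inc' keq unfolding New_def by blast
qed

end
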